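(* Let $\kappa^2>0$ and consider \[ \mathcal{G}(\mathbf{u})=\frac{1}{2\pi}\int_{-\pi}^{\pi}|\partial_t\mathbf{u}|^2\,dt+\frac{\kappa^2}{2\pi}\int_{-\pi}^{\pi}|\mathbf{u}\times\mathbf{n}|^2\,dt \] on $\mathcal{K}=\{\mathbf{u}\in H^1_\sharp([-\pi,\pi],\mathbb{R}^3):\ \frac{1}{2\pi}\int_{-\pi}^{\pi}|\mathbf{u}|^2\,dt=1\}$. Every critical point $\mathbf{u}$ of $\mathcal{G}$ on $\mathcal{K}$ with $\mathcal{G}(\mathbf{u})<\kappa^2$ is in-plane, i.e. $\mathbf{u}(t)\cdot\mathbf{e}_3=0$ for all $t$. Moreover, every minimizer $\mathbf{u}$ of $\mathcal{G}$ on $\mathcal{K}$ satisfies $0<\mathcal{G}(\mathbf{u})\le\min\{\kappa^2/2,1\}$, and in particular every minimizer of $\mathcal{G}$ on $\mathcal{K}$ is in-plane.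
   Context: $H^1_\sharp([-\pi,\pi],\mathbb{R}^3)$ denotes $2\pi$-periodic $H^1$ functions $[-\pi,\pi]\to\mathbb{R}^3$. $\mathbf{n}(t)=(\cos t,\sin t,0)$, $\mathbf{e}_3=(0,0,1)$. A critical point of $\mathcal{G}$ on $\mathcal{K}$ is $\mathbf{u}\in\mathcal{K}$ that weakly solves $-\partial_{tt}\mathbf{u}+\kappa^2(\mathbf{u}-(\mathbf{n}\otimes\mathbf{n})\mathbf{u})=\lambda\mathbf{u}$ in $(H^1_\sharp([-\pi,\pi],\mathbb{R}^3))'$ for some $\lambda\in\mathbb{R}$. *)

theory Defs
  imports "HOL-Analysis.Analysis" "HOL-Analysis.Cross3"
begin

text \<open>An element of the periodic Sobolev space on [-pi,pi]
  is represented by its continuous (absolutely continuous) representative \<open>u\<close>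
  together with a weak derivative \<open>v\<close> in L^2.\<close>

definition nvec :: "real \<Rightarrow> real^3" where
  "nvec t = vector [cos t, sin t, 0]"

definition e3 :: "real^3" where
  "e3 = vector [0, 0, 1]"

definition weak_deriv :: "(real \<Rightarrow> real^3) \<Rightarrow> (real \<Rightarrow> real^3) \<Rightarrow> bool" where
  "weak_deriv u v \<longleftrightarrow>
     v absolutely_integrable_on {-pi..pi} \<and>
     (\<lambda>t. (norm (v t))\<^sup>2) integrable_on {-pi..pi} \<and>
     (\<forall>t\<in>{-pi..pi}. u t = u (-pi) + integral {-pi..t} v)"

definition H1per :: "(real \<Rightarrow> real^3) \<Rightarrow> bool" where
  "H1per u \<longleftrightarrow> (\<exists>v. weak_deriv u v) \<and> u pi = u (-pi)"

definition wderiv :: "(real \<Rightarrow> real^3) \<Rightarrow> real \<Rightarrow> real^3" where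
  "wderiv u = (SOME v. weak_deriv u v)"

definition Gfun :: "real \<Rightarrow> (real \<Rightarrow> real^3) \<Rightarrow> real" where
  "Gfun kappa u =
     1 / (2 * pi) * integral {-pi..pi} (\<lambda>t. (norm (wderiv u t))\<^sup>2)
     + kappa\<^sup>2 / (2 * pi) * integral {-pi..pi} (\<lambda>t. (norm (cross3 (u t) (nvec t)))\<^sup>2)"

definition Kset :: "(real \<Rightarrow> real^3) set" where
  "Kset = {u. H1per u \<and> 1 / (2 * pi) * integral {-pi..pi} (\<lambda>t. (norm (u t))\<^sup>2) = 1}"

text \<open>Weak form of  -u'' + kappa^2 (u - (n n^T) u) = lambda u  tested against all
  phi in H^1_sharp (the pairing of -u'' with phi is int u' . phi').\<close>
definition critical_point :: "real \<Rightarrow> (real \<Rightarrow> real^3) \<Rightarrow> bool" where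
  "critical_point kappa u \<longleftrightarrow> u \<in> Kset \<and>
     (\<exists>lam::real. \<forall>phi. H1per phi \<longrightarrow>
        integral {-pi..pi} (\<lambda>t. wderiv u t \<bullet> wderiv phi t
            + kappa\<^sup>2 * ((u t - (nvec t \<bullet> u t) *\<^sub>R nvec t) \<bullet> phi t))
        = lam * integral {-pi..pi} (\<lambda>t. u t \<bullet> phi t))"

definition minimizer :: "real \<Rightarrow> (real \<Rightarrow> real^3) \<Rightarrow> bool" where
  "minimizer kappa u \<longleftrightarrow> u \<in> Kset \<and> (\<forall>w\<in>Kset. Gfun kappa u \<le> Gfun kappa w)"

definition in_plane :: "(real \<Rightarrow> real^3) \<Rightarrow> bool" where
  "in_plane u \<longleftrightarrow> (\<forall>t\<in>{-pi..pi}. u t \<bullet> e3 = 0)"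

end

theory Submission
  imports Defs "HOL-Analysis.Radon_Nikodym"
begin


lemma ident_meas_leb[measurable]: "(\<lambda>x::'a::euclidean_space. x) \<in> borel_measurable lebesgue"
  using id_borel_measurable_lebesgue by (simp add: id_def)

lemma lemZ:
  fixes w :: "real \<Rightarrow> real"
  assumes wi: "w absolutely_integrable_on {a..b}" and ab: "a \<le> b"
    and z: "\<forall>t\<in>{a..b}. integral {a..t} w = 0"
  shows "negligible {t\<in>{a..b}. w t \<noteq> 0}"
proof -
  define g where "g = (\<lambda>x. indicator {a..b} x * w x)"
  have gi: "integrable lebesgue g" using wi by (simp add: set_integrable_def g_def)
  hence gm: "g \<in> borel_measurable lebesgue" by (rule borel_measurable_integrable)
  obtain g' where g'm: "g' \<in> borel_measurable lborel" and ae: "AE x in lborel. g x = g' x"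
    using completion_ex_borel_measurable_real[OF gm] by blast
  have ae2: "AE x in lebesgue. g x = g' x" using ae by (rule AE_completion)
  have g'm2[measurable]: "g' \<in> borel_measurable lebesgue" using g'm by (rule measurable_completion)
  note gm[measurable]
  have g'i: "integrable lborel g'"
  proof -
    have "integrable lebesgue g'" using integrable_cong_AE_imp[OF gi _ ae2] g'm
      by (meson measurable_completion)
    thus ?thesis using integrable_completion[OF g'm] by simp
  qed
  have int0: "integral\<^sup>L lborel (\<lambda>y. g' y * indicator {x<..} y) = 0" for x
  proof -
    have "integral\<^sup>L lborel (\<lambda>y. g' y * indicator {x<..} y) = integral\<^sup>L lebesgue (\<lambda>y. g' y * indicator {x<..} y)"
      by (rule integral_completion[symmetric]) (use g'm in measurable)
    also have "\<dots> = integral\<^sup>L lebesgue (\<lambda>y. g y * indicator {x<..} y)"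
      by (rule integral_cong_AE; (measurable)?) (use ae2 in auto)
    also have "\<dots> = (LINT y:({a..b} \<inter> {x<..})|lebesgue. w y)"
      unfolding set_lebesgue_integral_def g_def
      by (rule Bochner_Integration.integral_cong) (auto simp: indicator_def)
    also have "\<dots> = integral ({a..b} \<inter> {x<..}) w"
      by (rule set_lebesgue_integral_eq_integral(2), rule set_integrable_subset[OF wi]) auto
    also have "\<dots> = 0"
    proof (cases "x < a")
      case True
      hence "{a..b} \<inter> {x<..} = {a..b}" by auto
      thus ?thesis using z ab by auto
    next
      case False
      show ?thesis
      proof (cases "x < b")
        case True
        hence e: "{a..b} \<inter> {x<..} = {x<..b}" using False by auto
        have wI: "w integrable_on {a..b}" using wi set_lebesgue_integral_eq_integral(1) by blast
        have "integral {x<..b} w = integral {x..b} w"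
          by (rule integral_spike_set) (auto intro: negligible_subset[of "{x}"])
        also have "\<dots> = integral {a..b} w - integral {a..x} w"
          using Henstock_Kurzweil_Integration.integral_combine[OF _ _ wI, of x] True False by auto
        also have "\<dots> = 0" using z True False ab by auto
        finally show ?thesis using e by simp
      next
        case False2: False
        hence "{a..b} \<inter> {x<..} = {}" by auto
        thus ?thesis by simp
      qed
    qed
    finally show ?thesis .
  qed
  have nn: "(\<integral>\<^sup>+y. ennreal (g' y) * indicator {x<..} y \<partial>lborel) =
             (\<integral>\<^sup>+y. ennreal (- g' y) * indicator {x<..} y \<partial>lborel)
          \<and> (\<integral>\<^sup>+y. ennreal (g' y) * indicator {x<..} y \<partial>lborel) < \<infinity>" for x
  proof -
    have hi: "integrable lborel (\<lambda>y. g' y * indicator {x<..} y)"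
      by (rule integrable_real_mult_indicator) (use g'i in auto)
    obtain r q where rq: "0 \<le> r" "0 \<le> q"
      "(\<integral>\<^sup>+y. ennreal (g' y * indicator {x<..} y) \<partial>lborel) = ennreal r"
      "(\<integral>\<^sup>+y. ennreal (- (g' y * indicator {x<..} y)) \<partial>lborel) = ennreal q"
      "(\<lambda>y. g' y * indicator {x<..} y) \<in> borel_measurable lborel"
      "integral\<^sup>L lborel (\<lambda>y. g' y * indicator {x<..} y) = r - q"
      by (rule integrableE[OF hi])
    have e1: "(\<lambda>y. ennreal (g' y) * indicator {x<..} y) = (\<lambda>y. ennreal (g' y * indicator {x<..} y))"
      by (rule ext) (simp add: indicator_def)
    have e2: "(\<lambda>y. ennreal (- g' y) * indicator {x<..} y) = (\<lambda>y. ennreal (- (g' y * indicator {x<..} y)))"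
      by (rule ext) (simp add: indicator_def)
    show ?thesis using rq int0[of x] unfolding e1 e2 by simp
  qed
  have m1: "(\<lambda>y. ennreal (g' y)) \<in> borel_measurable lborel" using g'm by simp
  have m2: "(\<lambda>y. ennreal (- g' y)) \<in> borel_measurable lborel" using g'm by simp
  have "density lborel (\<lambda>y. ennreal (g' y)) = density lborel (\<lambda>y. ennreal (- g' y))"
  proof (rule measure_eqI_lessThan)
    fix x
    show "emeasure (density lborel (\<lambda>y. ennreal (g' y))) {x<..} < \<infinity>"
      unfolding emeasure_density[OF m1, of "{x<..}", simplified] using nn[of x] by (rule conjunct2)
    show "emeasure (density lborel (\<lambda>y. ennreal (g' y))) {x<..} = emeasure (density lborel (\<lambda>y. ennreal (- g' y))) {x<..}"
      unfolding emeasure_density[OF m1, of "{x<..}", simplified] emeasure_density[OF m2, of "{x<..}", simplified]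
      using nn[of x] by (rule conjunct1)
  qed simp_all
  hence "AE y in lborel. ennreal (g' y) = ennreal (- g' y)"
    by (rule sigma_finite_measure.density_unique[OF sigma_finite_lborel m1 m2])
  hence "AE y in lborel. g' y = 0"
  proof eventually_elim
    case (elim y)
    show ?case
    proof (cases "g' y \<ge> 0")
      case True
      hence "ennreal (- g' y) = 0" using ennreal_eq_0_iff[of "- g' y"] by simp
      with elim True show ?thesis by simp
    next
      case False
      hence "ennreal (g' y) = 0" using ennreal_eq_0_iff[of "g' y"] by simp
      with elim False show ?thesis by simp
    qed
  qed
  hence "AE y in lborel. g y = 0" using ae by eventually_elim auto
  hence "AE y in lebesgue. g y = 0" by (rule AE_completion)
  then obtain N where N: "negligible N" "{y. \<not> g y = 0} \<subseteq> N"
    unfolding eventually_ae_filter_negligible by blast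
  show ?thesis
    by (rule negligible_subset[OF N(1)]) (use N(2) in \<open>auto simp: g_def\<close>)
qed



lemma wd_int: assumes "weak_deriv u v"
  shows "v integrable_on {-pi..pi}" "v absolutely_integrable_on {-pi..pi}"
    "(\<lambda>t. (norm (v t))\<^sup>2) integrable_on {-pi..pi}"
proof -
  show "v absolutely_integrable_on {-pi..pi}" "(\<lambda>t. (norm (v t))\<^sup>2) integrable_on {-pi..pi}"
    using assms unfolding weak_deriv_def by auto
  thus "v integrable_on {-pi..pi}" using set_lebesgue_integral_eq_integral(1) by auto
qed

lemma wd_eq: assumes "weak_deriv u v" "t \<in> {-pi..pi}"
  shows "u t = u (-pi) + integral {-pi..t} v"
  using assms unfolding weak_deriv_def by blast

lemma wd_cont: assumes "weak_deriv u v" shows "continuous_on {-pi..pi} u"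
proof -
  have "continuous_on {-pi..pi} (\<lambda>t. integral {-pi..t} v)"
    by (rule indefinite_integral_continuous_1[OF wd_int(1)[OF assms]])
  hence "continuous_on {-pi..pi} (\<lambda>t. u (-pi) + integral {-pi..t} v)"
    by (rule continuous_on_add[OF continuous_on_const])
  thus ?thesis
  proof (rule continuous_on_eq)
    fix x assume "x \<in> {-pi..pi}"
    from wd_eq[OF assms this] show "u (-pi) + integral {-pi..x} v = u x" by (rule sym)
  qed
qed

lemma wd_unique: assumes "weak_deriv u v1" "weak_deriv u v2"
  shows "negligible {t\<in>{-pi..pi}. v1 t \<noteq> v2 t}"
proof -
  have neg: "negligible {t\<in>{-pi..pi}. (v1 t - v2 t) $ i \<noteq> 0}" for i
  proof (rule lemZ)
    have "(\<lambda>t. v1 t - v2 t) absolutely_integrable_on {-pi..pi}"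
      using wd_int(2)[OF assms(1)] wd_int(2)[OF assms(2)] by (rule set_integral_diff)
    from absolutely_integrable_component[OF this, of "axis i 1"]
    show "(\<lambda>t. (v1 t - v2 t) $ i) absolutely_integrable_on {-pi..pi}"
      by (simp add: inner_axis)
    show "\<forall>t\<in>{-pi..pi}. integral {-pi..t} (\<lambda>t. (v1 t - v2 t) $ i) = 0"
    proof
      fix t assume t: "t \<in> {-pi..pi}"
      have i1: "v1 integrable_on {-pi..t}"
        by (rule integrable_on_subinterval[OF wd_int(1)[OF assms(1)]]) (use t in auto)
      have i2: "v2 integrable_on {-pi..t}"
        by (rule integrable_on_subinterval[OF wd_int(1)[OF assms(2)]]) (use t in auto)
      have "integral {-pi..t} (\<lambda>t. (v1 t - v2 t) $ i) = integral {-pi..t} (\<lambda>t. v1 t - v2 t) $ i"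
        by (rule integral_component_eq_cart) (use i1 i2 in \<open>auto intro: integrable_diff\<close>)
      also have "\<dots> = (integral {-pi..t} v1 - integral {-pi..t} v2) $ i"
        using i1 i2 by (simp add: integral_diff)
      also have "\<dots> = 0" using wd_eq[OF assms(1) t] wd_eq[OF assms(2) t] by simp
      finally show "integral {-pi..t} (\<lambda>t. (v1 t - v2 t) $ i) = 0" .
    qed
  qed simp
  have "{t\<in>{-pi..pi}. v1 t \<noteq> v2 t} \<subseteq> (\<Union>i. {t\<in>{-pi..pi}. (v1 t - v2 t) $ i \<noteq> 0})"
    by (auto simp: vec_eq_iff)
  moreover have "negligible (\<Union>i. {t\<in>{-pi..pi}. (v1 t - v2 t) $ i \<noteq> 0})"
    by (rule negligible_Union) (use neg in auto)
  ultimately show ?thesis by (rule negligible_subset[rotated])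
qed

lemma sq_int_linear:
  assumes "weak_deriv u v" "bounded_linear L"
  shows "(\<lambda>t. (norm (L (v t)))\<^sup>2) integrable_on {-pi..pi}"
proof -
  obtain K where K: "\<And>x. norm (L x) \<le> norm x * K" "K > 0"
    using bounded_linear.pos_bounded[OF assms(2)] by blast
  have vm: "v \<in> borel_measurable (lebesgue_on {-pi..pi})"
    by (rule integrable_imp_measurable[OF wd_int(1)[OF assms(1)]])
  have cont: "continuous_on UNIV (\<lambda>x. (norm (L x))\<^sup>2)"
    by (intro continuous_on_power continuous_on_norm linear_continuous_on assms(2))
  have m: "(\<lambda>t. (norm (L (v t)))\<^sup>2) \<in> borel_measurable (lebesgue_on {-pi..pi})"
    using measurable_compose[OF vm borel_measurable_continuous_onI[OF cont]] by (simp add: o_def)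
  show ?thesis
  proof (rule measurable_bounded_by_integrable_imp_integrable_real[OF m])
    show "(\<lambda>t. K\<^sup>2 * (norm (v t))\<^sup>2) integrable_on {-pi..pi}"
      using integrable_on_cmult_left[OF wd_int(3)[OF assms(1)], of "K\<^sup>2"] by simp
    fix x
    have "(norm (L (v x)))\<^sup>2 \<le> (norm (v x) * K)\<^sup>2"
      by (rule power_mono[OF K(1)]) simp
    thus "\<bar>(norm (L (v x)))\<^sup>2\<bar> \<le> K\<^sup>2 * (norm (v x))\<^sup>2"
      by (simp add: power_mult_distrib mult.commute)
  qed simp
qed

lemma wd_linear:
  assumes "weak_deriv u v" "bounded_linear L"
  shows "weak_deriv (\<lambda>t. L (u t)) (\<lambda>t. L (v t))"
  unfolding weak_deriv_def
proof (intro conjI ballI)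
  show "(\<lambda>t. L (v t)) absolutely_integrable_on {-pi..pi}"
    using absolutely_integrable_linear[OF wd_int(2)[OF assms(1)] assms(2)] by (simp add: o_def)
  show "(\<lambda>t. (norm (L (v t)))\<^sup>2) integrable_on {-pi..pi}" by (rule sq_int_linear[OF assms])
  fix t assume t: "t \<in> {-pi..pi}"
  have i: "v integrable_on {-pi..t}"
    by (rule integrable_on_subinterval[OF wd_int(1)[OF assms(1)]]) (use t in auto)
  have "integral {-pi..t} (\<lambda>t. L (v t)) = L (integral {-pi..t} v)"
    using integral_linear[OF i assms(2)] by (simp add: o_def)
  moreover have "L (u t) = L (u (-pi)) + L (integral {-pi..t} v)"
    using wd_eq[OF assms(1) t] linear_add[OF bounded_linear.linear[OF assms(2)]] by metis
  ultimately show "L (u t) = L (u (-pi)) + integral {-pi..t} (\<lambda>t. L (v t))" by simp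
qed

lemma H1per_linear: assumes "H1per u" "bounded_linear L" shows "H1per (\<lambda>t. L (u t))"
  using assms wd_linear unfolding H1per_def by metis

lemma wderiv_wd: assumes "H1per u" shows "weak_deriv u (wderiv u)"
  using assms unfolding H1per_def wderiv_def by (metis someI_ex)

lemma wderiv_ae: assumes "H1per u" "weak_deriv u v"
  shows "negligible {t\<in>{-pi..pi}. wderiv u t \<noteq> v t}"
  by (rule wd_unique[OF wderiv_wd[OF assms(1)] assms(2)])

lemma wderiv_integral:
  assumes "H1per u" "weak_deriv u v"
  shows "integral {-pi..pi} (\<lambda>t. F (wderiv u t) t) = integral {-pi..pi} (\<lambda>t. F (v t) t)"
  by (rule integral_spike[OF wderiv_ae[OF assms]]) auto

lemma wd_const: "weak_deriv (\<lambda>t. c) (\<lambda>t. 0)"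
  unfolding weak_deriv_def by (simp add: integrable_0)




lemma norm3_sq: "(norm (x::real^3))\<^sup>2 = (x$1)\<^sup>2 + (x$2)\<^sup>2 + (x$3)\<^sup>2"
  unfolding power2_norm_eq_inner inner_vec_def sum_3 by (simp add: power2_eq_square)

lemma inner3: "(x::real^3) \<bullet> y = x$1 * y$1 + x$2 * y$2 + x$3 * y$3"
  by (simp add: inner_vec_def sum_3)

lemma nvec_comp[simp]: "nvec t $ 1 = cos t" "nvec t $ 2 = sin t" "nvec t $ 3 = 0"
  by (simp_all add: nvec_def)

lemma e3_comp[simp]: "e3 $ 1 = 0" "e3 $ 2 = 0" "e3 $ 3 = 1"
  by (simp_all add: e3_def)

lemma norm_nvec[simp]: "norm (nvec t) = 1"
proof -
  have "(norm (nvec t))\<^sup>2 = 1" by (simp add: norm3_sq)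
  hence "norm (nvec t) = 1 \<or> norm (nvec t) = -1" by (simp add: power2_eq_1_iff)
  thus ?thesis using norm_ge_zero[of "nvec t"] by linarith
qed

definition nvecd :: "real \<Rightarrow> real^3" where "nvecd t = vector [- sin t, cos t, 0]"

lemma nvec_decomp: "nvec = (\<lambda>t. cos t *\<^sub>R axis 1 1 + sin t *\<^sub>R axis 2 1)"
  by (rule ext) (simp add: vec_eq_iff forall_3 axis_def)

lemma nvecd_decomp: "nvecd = (\<lambda>t. (- sin t) *\<^sub>R axis 1 1 + cos t *\<^sub>R axis 2 1)"
  by (rule ext) (simp add: vec_eq_iff forall_3 axis_def nvecd_def)

lemma nvec_deriv: "(nvec has_vector_derivative nvecd t) (at t within S)"
  unfolding nvec_decomp nvecd_decomp
  by (auto intro!: derivative_eq_intros)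

lemma nvecd_cont: "continuous_on S nvecd"
  unfolding nvecd_decomp by (intro continuous_intros)

lemma nvec_cont: "continuous_on S nvec"
  unfolding nvec_decomp by (intro continuous_intros)

lemma norm_nvecd[simp]: "norm (nvecd t) = 1"
proof -
  have "(norm (nvecd t))\<^sup>2 = 1" by (simp add: norm3_sq nvecd_def)
  hence "norm (nvecd t) = 1 \<or> norm (nvecd t) = -1" by (simp add: power2_eq_1_iff)
  thus ?thesis using norm_ge_zero[of "nvecd t"] by linarith
qed

lemma int_const: "integral {-pi..pi} (\<lambda>t. c) = 2 * pi * (c::real)"
  by simp

lemma wd_nvec: "weak_deriv nvec nvecd"
  unfolding weak_deriv_def
proof (intro conjI ballI)
  show "nvecd absolutely_integrable_on {-pi..pi}"
    by (rule absolutely_integrable_continuous_real[OF nvecd_cont])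
  show "(\<lambda>t. (norm (nvecd t))\<^sup>2) integrable_on {-pi..pi}"
    by (simp, intro integrable_continuous_interval continuous_intros)
  fix t assume t: "t \<in> {-pi..pi}"
  have "(nvecd has_integral (nvec t - nvec (-pi))) {-pi..t}"
    by (rule fundamental_theorem_of_calculus) (use t nvec_deriv in auto)
  thus "nvec t = nvec (-pi) + integral {-pi..t} nvecd" by (simp add: integral_unique)
qed

lemma nvec_K: "nvec \<in> Kset"
  unfolding Kset_def H1per_def using wd_nvec by (auto simp: vec_eq_iff forall_3)

lemma G_nvec: "Gfun kappa nvec = 1"
proof -
  have "integral {-pi..pi} (\<lambda>t. (norm (wderiv nvec t))\<^sup>2) = integral {-pi..pi} (\<lambda>t. (norm (nvecd t))\<^sup>2)"
    by (rule wderiv_integral[OF _ wd_nvec]) (use nvec_K in \<open>simp add: Kset_def\<close>)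
  thus ?thesis unfolding Gfun_def by simp
qed

definition c0 :: "real^3" where "c0 = vector [1, 0, 0]"

lemma c0_K: "(\<lambda>t. c0) \<in> Kset"
proof -
  have "norm c0 = 1" by (simp add: norm_eq_1 inner3 c0_def)
  thus ?thesis unfolding Kset_def H1per_def using wd_const by auto
qed

lemma int_sin_sq: "integral {-pi..pi} (\<lambda>t. (sin t)\<^sup>2) = pi"
proof -
  have "((\<lambda>t. (sin t)\<^sup>2) has_integral ((pi/2 - sin (2*pi)/4) - (-pi/2 - sin (2*(-pi))/4))) {-pi..pi}"
  proof (rule fundamental_theorem_of_calculus)
    fix x :: real
    have "((\<lambda>t. t/2 - sin (2*t)/4) has_real_derivative (1/2 - cos (2*x) * 2 / 4)) (at x within {-pi..pi})"
      by (auto intro!: derivative_eq_intros)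
    moreover have "1/2 - cos (2*x) * 2 / 4 = (sin x)\<^sup>2"
      using cos_double_sin[of x] by (simp add: algebra_simps)
    ultimately show "((\<lambda>t. t/2 - sin (2*t)/4) has_vector_derivative (sin x)\<^sup>2) (at x within {-pi..pi})"
      by (simp add: has_real_derivative_iff_has_vector_derivative)
  qed simp
  thus ?thesis by (simp add: integral_unique)
qed

lemma G_c0: "Gfun kappa (\<lambda>t. c0) = kappa\<^sup>2 / 2"
proof -
  have "integral {-pi..pi} (\<lambda>t. (norm (wderiv (\<lambda>t. c0) t))\<^sup>2) = integral {-pi..pi} (\<lambda>t. (norm ((\<lambda>t. 0::real^3) t))\<^sup>2)"
    by (rule wderiv_integral[OF _ wd_const]) (use c0_K in \<open>simp add: Kset_def\<close>)
  moreover have "(norm (cross3 c0 (nvec t)))\<^sup>2 = (sin t)\<^sup>2" for t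
    by (simp add: norm3_sq c0_def cross3_def)
  ultimately show ?thesis unfolding Gfun_def by (simp add: int_sin_sq)
qed




definition P3 :: "real^3 \<Rightarrow> real^3" where "P3 x = (x$3) *\<^sub>R e3"
definition Pp :: "real^3 \<Rightarrow> real^3" where "Pp x = x - (x$3) *\<^sub>R e3"

lemma bl_P3: "bounded_linear P3"
  unfolding P3_def by (intro bounded_linear_scaleR_const bounded_linear_vec_nth)

lemma bl_Pp: "bounded_linear Pp"
  unfolding Pp_def by (intro bounded_linear_sub bounded_linear_ident bounded_linear_scaleR_const bounded_linear_vec_nth)

lemma bl_c3: "bounded_linear (\<lambda>x::real^3. x$3)" by (rule bounded_linear_vec_nth)

lemma P3_comp[simp]: "P3 x $ 1 = 0" "P3 x $ 2 = 0" "P3 x $ 3 = x$3"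
  by (simp_all add: P3_def)
lemma Pp_comp[simp]: "Pp x $ 1 = x$1" "Pp x $ 2 = x$2" "Pp x $ 3 = 0"
  by (simp_all add: Pp_def)

lemma pw1: "(norm x)\<^sup>2 = (norm (Pp x))\<^sup>2 + (x$3)\<^sup>2"
  by (simp add: norm3_sq)

lemma pw2: "(norm (cross3 x (nvec t)))\<^sup>2 = (norm (cross3 (Pp x) (nvec t)))\<^sup>2 + (x$3)\<^sup>2"
proof -
  have e: "(x$3)\<^sup>2 * (sin t)\<^sup>2 + (x$3)\<^sup>2 * (cos t)\<^sup>2 = (x$3)\<^sup>2"
    using sin_cos_squared_add[of t] by (metis distrib_left mult.right_neutral)
  show ?thesis unfolding norm3_sq cross3_def vector_3 Pp_comp nvec_comp
    using e by (simp add: power_mult_distrib)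
qed

lemma pw3: "(x - (nvec t \<bullet> x) *\<^sub>R nvec t) \<bullet> x = (norm (cross3 x (nvec t)))\<^sup>2"
proof -
  have "(norm (cross3 x (nvec t)))\<^sup>2 = (norm x)\<^sup>2 - (x \<bullet> nvec t)\<^sup>2"
    using norm_cross[of x "nvec t"] by simp
  moreover have "(x - (nvec t \<bullet> x) *\<^sub>R nvec t) \<bullet> x = x \<bullet> x - (x \<bullet> nvec t) * (x \<bullet> nvec t)"
    by (simp add: inner_diff_left inner_commute[of "nvec t" x])
  ultimately show ?thesis by (simp add: power2_eq_square flip: power2_norm_eq_inner)
qed

lemma pw4: "(x - (nvec t \<bullet> x) *\<^sub>R nvec t) \<bullet> P3 x = (x$3)\<^sup>2"
  unfolding inner3 by (simp add: power2_eq_square)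

lemma pw5: "y \<bullet> P3 y = (y$3)\<^sup>2" "(norm (P3 y))\<^sup>2 = (y$3)\<^sup>2"
  by (simp add: inner3 power2_eq_square, simp add: norm3_sq)

lemma pw6: "cross3 (s *\<^sub>R y) (nvec t) = s *\<^sub>R cross3 y (nvec t)"
  by (rule cross_mult_left)

lemma cont_lin: fixes u :: "real \<Rightarrow> real^3" and L :: "real^3 \<Rightarrow> 'b::real_normed_vector"
  shows "continuous_on S u \<Longrightarrow> bounded_linear L \<Longrightarrow> continuous_on S (\<lambda>t. L (u t))"
  by (rule linear_continuous_on_compose) (auto dest: bounded_linear.linear)

lemma cont_cross_sq: fixes u :: "real \<Rightarrow> real^3" shows "continuous_on S u \<Longrightarrow> continuous_on S (\<lambda>t. (norm (cross3 (u t) (nvec t)))\<^sup>2)"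
  by (intro continuous_intros continuous_on_cross nvec_cont)

lemma cont_c3_sq: fixes u :: "real \<Rightarrow> real^3" shows "continuous_on S u \<Longrightarrow> continuous_on S (\<lambda>t. (u t $ 3)\<^sup>2)"
  by (intro continuous_intros cont_lin[OF _ bl_c3])




lemma int0_neg:
  fixes f :: "real \<Rightarrow> real"
  assumes fi: "f integrable_on {a..b}" and nn: "\<forall>x\<in>{a..b}. 0 \<le> f x"
    and z: "integral {a..b} f = 0" and ab: "a \<le> b"
  shows "negligible {x\<in>{a..b}. f x \<noteq> 0}"
proof (rule lemZ)
  show "f absolutely_integrable_on {a..b}"
    by (rule nonnegative_absolutely_integrable_1[OF fi]) (use nn in auto)
  show "\<forall>t\<in>{a..b}. integral {a..t} f = 0"
  proof
    fix t assume t: "t \<in> {a..b}"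
    have it: "f integrable_on {a..t}" by (rule integrable_on_subinterval[OF fi]) (use t in auto)
    have "integral {a..t} f \<le> integral {a..b} f"
      by (rule integral_subset_le) (use t it fi nn in auto)
    moreover have "0 \<le> integral {a..t} f"
      by (rule integral_nonneg[OF it]) (use t nn in auto)
    ultimately show "integral {a..t} f = 0" using z by simp
  qed
qed (rule ab)

lemma int_lin:
  fixes f g :: "real \<Rightarrow> real"
  assumes "f integrable_on S" "g integrable_on S"
  shows "integral S (\<lambda>t. f t + c * g t) = integral S f + c * integral S g"
proof -
  have cg: "(\<lambda>t. c * g t) integrable_on S" using integrable_on_cmult_left[OF assms(2), of c] by simp
  hence "integral S (\<lambda>t. f t + c * g t) = integral S f + integral S (\<lambda>t. c * g t)"
    using integral_add[OF assms(1) cg] by simp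
  thus ?thesis by simp
qed

lemma Kset_D:
  assumes "u \<in> Kset"
  shows "H1per u" "weak_deriv u (wderiv u)" "continuous_on {-pi..pi} u"
    "integral {-pi..pi} (\<lambda>t. (norm (u t))\<^sup>2) = 2 * pi"
proof -
  show h: "H1per u" using assms by (simp add: Kset_def)
  show w: "weak_deriv u (wderiv u)" by (rule wderiv_wd[OF h])
  show "continuous_on {-pi..pi} u" by (rule wd_cont[OF w])
  show "integral {-pi..pi} (\<lambda>t. (norm (u t))\<^sup>2) = 2 * pi" using assms by (simp add: Kset_def)
qed

lemma partA:
  assumes kp: "kappa\<^sup>2 > 0" and cp: "critical_point kappa u" and Glt: "Gfun kappa u < kappa\<^sup>2"
  shows "in_plane u"
proof -
  obtain lam where uK: "u \<in> Kset" and crit: "\<And>phi. H1per phi \<Longrightarrow>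
        integral {-pi..pi} (\<lambda>t. wderiv u t \<bullet> wderiv phi t
            + kappa\<^sup>2 * ((u t - (nvec t \<bullet> u t) *\<^sub>R nvec t) \<bullet> phi t))
        = lam * integral {-pi..pi} (\<lambda>t. u t \<bullet> phi t)"
    using cp unfolding critical_point_def by blast
  note KD = Kset_D[OF uK]
  define v where "v = wderiv u"
  have wdv: "weak_deriv u v" using KD(2) by (simp add: v_def)
  have uc: "continuous_on {-pi..pi} u" by (rule KD(3))
  have iD: "(\<lambda>t. (norm (v t))\<^sup>2) integrable_on {-pi..pi}" by (rule wd_int(3)[OF wdv])
  have iC: "(\<lambda>t. (norm (cross3 (u t) (nvec t)))\<^sup>2) integrable_on {-pi..pi}"
    by (rule integrable_continuous_interval[OF cont_cross_sq[OF uc]])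
  define D where "D = integral {-pi..pi} (\<lambda>t. (norm (v t))\<^sup>2)"
  define C where "C = integral {-pi..pi} (\<lambda>t. (norm (cross3 (u t) (nvec t)))\<^sup>2)"
  have G: "Gfun kappa u = (D + kappa\<^sup>2 * C) / (2 * pi)"
    unfolding Gfun_def D_def C_def v_def by (simp add: field_simps)
  have "integral {-pi..pi} (\<lambda>t. wderiv u t \<bullet> wderiv u t
            + kappa\<^sup>2 * ((u t - (nvec t \<bullet> u t) *\<^sub>R nvec t) \<bullet> u t))
        = lam * integral {-pi..pi} (\<lambda>t. u t \<bullet> u t)" by (rule crit[OF KD(1)])
  moreover have "integral {-pi..pi} (\<lambda>t. wderiv u t \<bullet> wderiv u t
            + kappa\<^sup>2 * ((u t - (nvec t \<bullet> u t) *\<^sub>R nvec t) \<bullet> u t))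
      = integral {-pi..pi} (\<lambda>t. (norm (v t))\<^sup>2 + kappa\<^sup>2 * (norm (cross3 (u t) (nvec t)))\<^sup>2)"
    by (rule integral_cong) (simp add: pw3 v_def power2_norm_eq_inner)
  moreover have "\<dots> = D + kappa\<^sup>2 * C"
    unfolding D_def C_def using iD iC by (rule int_lin)
  moreover have "integral {-pi..pi} (\<lambda>t. u t \<bullet> u t) = 2 * pi"
    using KD(4) by (simp add: power2_norm_eq_inner)
  ultimately have "D + kappa\<^sup>2 * C = lam * (2 * pi)" by simp
  hence lamG: "lam = Gfun kappa u" using G by (simp add: field_simps)
  define psi where "psi = (\<lambda>t. P3 (u t))"
  have Hpsi: "H1per psi" unfolding psi_def by (rule H1per_linear[OF KD(1) bl_P3])
  have wdpsi: "weak_deriv psi (\<lambda>t. P3 (v t))" unfolding psi_def by (rule wd_linear[OF wdv bl_P3])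
  have iD3: "(\<lambda>t. (v t $ 3)\<^sup>2) integrable_on {-pi..pi}"
    using sq_int_linear[OF wdv bl_c3] by simp
  have iI3: "(\<lambda>t. (u t $ 3)\<^sup>2) integrable_on {-pi..pi}"
    by (rule integrable_continuous_interval[OF cont_c3_sq[OF uc]])
  define D3 where "D3 = integral {-pi..pi} (\<lambda>t. (v t $ 3)\<^sup>2)"
  define I3 where "I3 = integral {-pi..pi} (\<lambda>t. (u t $ 3)\<^sup>2)"
  have "integral {-pi..pi} (\<lambda>t. wderiv u t \<bullet> wderiv psi t
            + kappa\<^sup>2 * ((u t - (nvec t \<bullet> u t) *\<^sub>R nvec t) \<bullet> psi t))
        = lam * integral {-pi..pi} (\<lambda>t. u t \<bullet> psi t)" by (rule crit[OF Hpsi])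
  moreover have "integral {-pi..pi} (\<lambda>t. wderiv u t \<bullet> wderiv psi t
            + kappa\<^sup>2 * ((u t - (nvec t \<bullet> u t) *\<^sub>R nvec t) \<bullet> psi t))
     = integral {-pi..pi} (\<lambda>t. v t \<bullet> P3 (v t)
            + kappa\<^sup>2 * ((u t - (nvec t \<bullet> u t) *\<^sub>R nvec t) \<bullet> psi t))"
    using wderiv_integral[OF Hpsi wdpsi, of "\<lambda>w t. v t \<bullet> w + kappa\<^sup>2 * ((u t - (nvec t \<bullet> u t) *\<^sub>R nvec t) \<bullet> psi t)"]
    by (simp add: v_def)
  moreover have "\<dots> = integral {-pi..pi} (\<lambda>t. (v t $ 3)\<^sup>2 + kappa\<^sup>2 * (u t $ 3)\<^sup>2)"
    by (rule integral_cong) (simp add: psi_def pw4 pw5)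
  moreover have "\<dots> = D3 + kappa\<^sup>2 * I3"
    unfolding D3_def I3_def using iD3 iI3 by (rule int_lin)
  moreover have "integral {-pi..pi} (\<lambda>t. u t \<bullet> psi t) = I3"
    unfolding I3_def psi_def by (simp add: pw5)
  ultimately have eq: "D3 + kappa\<^sup>2 * I3 = lam * I3" by simp
  have D3nn: "0 \<le> D3" unfolding D3_def by (rule integral_nonneg[OF iD3]) simp
  have I3nn: "0 \<le> I3" unfolding I3_def by (rule integral_nonneg[OF iI3]) simp
  have "(kappa\<^sup>2 - lam) * I3 \<le> 0" using eq D3nn by (simp add: algebra_simps)
  moreover have "kappa\<^sup>2 - lam > 0" using Glt lamG by simp
  ultimately have "I3 = 0" using I3nn by (simp add: mult_le_0_iff)
  hence "\<forall>t\<in>{-pi..pi}. (u t $ 3)\<^sup>2 = 0"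
    unfolding I3_def using integral_eq_0_iff[OF cont_c3_sq[OF uc]] pi_gt_zero by simp
  thus ?thesis unfolding in_plane_def by (simp add: inner3)
qed



lemma arith1:
  fixes P I X D3 k :: real
  assumes P: "P > 0" and I: "0 < I" "I < P" and X: "X \<ge> 0" and D3: "D3 \<ge> 0" and k: "k > 0"
    and h1: "(X + (D3 + k * I)) / P \<le> X / (P - I)"
    and h2: "(X + (D3 + k * I)) / P \<le> k / 2"
  shows False
proof -
  let ?Y = "D3 + k * I"
  have "(X + ?Y) * (P - I) \<le> X * P"
    using h1 P I by (simp add: divide_le_eq le_divide_eq field_simps)
  hence "?Y * (P - I) \<le> X * I" by (simp add: algebra_simps)
  moreover have "k * I * (P - I) \<le> ?Y * (P - I)"
    using D3 I by (intro mult_right_mono) auto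
  ultimately have "I * (k * (P - I)) \<le> I * X" by (simp add: algebra_simps)
  hence "k * (P - I) \<le> X" using I by simp
  hence "k * P \<le> X + ?Y" using D3 by (simp add: algebra_simps)
  hence "k \<le> (X + ?Y) / P" using P by (simp add: le_divide_eq)
  with h2 k show False by linarith
qed



lemma partB:
  assumes kp: "kappa\<^sup>2 > 0" and mn: "minimizer kappa u"
  shows "0 < Gfun kappa u \<and> Gfun kappa u \<le> min (kappa\<^sup>2 / 2) 1 \<and> in_plane u"
proof -
  have uK: "u \<in> Kset" and minl: "\<And>w. w \<in> Kset \<Longrightarrow> Gfun kappa u \<le> Gfun kappa w"
    using mn unfolding minimizer_def by auto
  have le1: "Gfun kappa u \<le> 1" using minl[OF nvec_K] G_nvec by simp
  have le2: "Gfun kappa u \<le> kappa\<^sup>2 / 2" using minl[OF c0_K] G_c0 by simp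
  note KD = Kset_D[OF uK]
  define v where "v = wderiv u"
  have wdv: "weak_deriv u v" using KD(2) by (simp add: v_def)
  have uc: "continuous_on {-pi..pi} u" by (rule KD(3))
  have iD: "(\<lambda>t. (norm (v t))\<^sup>2) integrable_on {-pi..pi}" by (rule wd_int(3)[OF wdv])
  have iC: "(\<lambda>t. (norm (cross3 (u t) (nvec t)))\<^sup>2) integrable_on {-pi..pi}"
    by (rule integrable_continuous_interval[OF cont_cross_sq[OF uc]])
  define D where "D = integral {-pi..pi} (\<lambda>t. (norm (v t))\<^sup>2)"
  define C where "C = integral {-pi..pi} (\<lambda>t. (norm (cross3 (u t) (nvec t)))\<^sup>2)"
  have G: "Gfun kappa u = (D + kappa\<^sup>2 * C) / (2 * pi)"
    unfolding Gfun_def D_def C_def v_def by (simp add: field_simps)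
  have Dnn: "0 \<le> D" unfolding D_def by (rule integral_nonneg[OF iD]) simp
  have Cnn: "0 \<le> C" unfolding C_def by (rule integral_nonneg[OF iC]) simp
  have pos: "0 < Gfun kappa u"
  proof (rule ccontr)
    assume "\<not> 0 < Gfun kappa u"
    hence "D + kappa\<^sup>2 * C \<le> 0" using G pi_gt_zero by (auto simp: zero_less_divide_iff)
    hence D0: "D = 0" and C0: "C = 0" using Dnn Cnn kp
      by (smt (verit) mult_nonneg_nonneg zero_less_mult_iff)+
    have cr0: "\<forall>t\<in>{-pi..pi}. (norm (cross3 (u t) (nvec t)))\<^sup>2 = 0"
      using C0 integral_eq_0_iff[OF cont_cross_sq[OF uc]] pi_gt_zero unfolding C_def by simp
    have negv: "negligible {t\<in>{-pi..pi}. (norm (v t))\<^sup>2 \<noteq> 0}"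
      by (rule int0_neg[OF iD]) (use D0 pi_gt_zero in \<open>auto simp: D_def\<close>)
    have const: "u t = u (-pi)" if t: "t \<in> {-pi..pi}" for t
    proof -
      have "integral {-pi..t} v = integral {-pi..t} (\<lambda>_. 0)"
        by (rule integral_spike[OF negv]) (use t in auto)
      thus ?thesis using wd_eq[OF wdv t] by simp
    qed
    define c where "c = u (-pi)"
    have z0: "(0::real) \<in> {-pi..pi}" and z1: "pi/2 \<in> {-pi..pi}" using pi_gt_zero by auto
    have "cross3 c (nvec 0) = 0" using cr0[rule_format, OF z0] const[OF z0] by (simp add: c_def)
    moreover have "cross3 c (nvec (pi/2)) = 0" using cr0[rule_format, OF z1] const[OF z1] by (simp add: c_def)
    ultimately have c0: "c = 0"
      by (simp add: cross3_def vec_eq_iff forall_3 nvec_def)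
    have "integral {-pi..pi} (\<lambda>t. (norm (u t))\<^sup>2) = integral {-pi..pi} (\<lambda>t. 0::real)"
    proof (rule integral_cong)
      fix x assume "x \<in> {-pi..pi}"
      from const[OF this] c0 show "(norm (u x))\<^sup>2 = 0" by (simp add: c_def)
    qed
    thus False using KD(4) pi_gt_zero by simp
  qed
  have iDp: "(\<lambda>t. (norm (Pp (v t)))\<^sup>2) integrable_on {-pi..pi}" by (rule sq_int_linear[OF wdv bl_Pp])
  have iD3: "(\<lambda>t. (v t $ 3)\<^sup>2) integrable_on {-pi..pi}"
    using sq_int_linear[OF wdv bl_c3] by simp
  have upc: "continuous_on {-pi..pi} (\<lambda>t. Pp (u t))" by (rule cont_lin[OF uc bl_Pp])
  have iCp: "(\<lambda>t. (norm (cross3 (Pp (u t)) (nvec t)))\<^sup>2) integrable_on {-pi..pi}"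
    by (rule integrable_continuous_interval[OF cont_cross_sq[OF upc]])
  have iI3: "(\<lambda>t. (u t $ 3)\<^sup>2) integrable_on {-pi..pi}"
    by (rule integrable_continuous_interval[OF cont_c3_sq[OF uc]])
  have iUp: "(\<lambda>t. (norm (Pp (u t)))\<^sup>2) integrable_on {-pi..pi}"
    by (intro integrable_continuous_interval continuous_intros upc)
  define Dp where "Dp = integral {-pi..pi} (\<lambda>t. (norm (Pp (v t)))\<^sup>2)"
  define D3 where "D3 = integral {-pi..pi} (\<lambda>t. (v t $ 3)\<^sup>2)"
  define Cp where "Cp = integral {-pi..pi} (\<lambda>t. (norm (cross3 (Pp (u t)) (nvec t)))\<^sup>2)"
  define I3 where "I3 = integral {-pi..pi} (\<lambda>t. (u t $ 3)\<^sup>2)"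
  define Up where "Up = integral {-pi..pi} (\<lambda>t. (norm (Pp (u t)))\<^sup>2)"
  have DD: "D = Dp + D3"
  proof -
    have "D = integral {-pi..pi} (\<lambda>t. (norm (Pp (v t)))\<^sup>2 + 1 * (v t $ 3)\<^sup>2)"
      unfolding D_def by (rule integral_cong) (simp only: mult_1, rule pw1)
    also have "\<dots> = Dp + D3" unfolding Dp_def D3_def using int_lin[OF iDp iD3, of 1] by simp
    finally show ?thesis .
  qed
  have CC: "C = Cp + I3"
  proof -
    have "C = integral {-pi..pi} (\<lambda>t. (norm (cross3 (Pp (u t)) (nvec t)))\<^sup>2 + 1 * (u t $ 3)\<^sup>2)"
      unfolding C_def by (rule integral_cong) (simp only: mult_1, rule pw2)
    also have "\<dots> = Cp + I3" unfolding Cp_def I3_def using int_lin[OF iCp iI3, of 1] by simp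
    finally show ?thesis .
  qed
  have UU: "2 * pi = Up + I3"
  proof -
    have "2 * pi = integral {-pi..pi} (\<lambda>t. (norm (Pp (u t)))\<^sup>2 + 1 * (u t $ 3)\<^sup>2)"
      unfolding KD(4)[symmetric] by (rule integral_cong) (simp only: mult_1, rule pw1)
    also have "\<dots> = Up + I3" unfolding Up_def I3_def using int_lin[OF iUp iI3, of 1] by simp
    finally show ?thesis .
  qed
  have Dpnn: "0 \<le> Dp" unfolding Dp_def by (rule integral_nonneg[OF iDp]) simp
  have D3nn: "0 \<le> D3" unfolding D3_def by (rule integral_nonneg[OF iD3]) simp
  have Cpnn: "0 \<le> Cp" unfolding Cp_def by (rule integral_nonneg[OF iCp]) simp
  have I3nn: "0 \<le> I3" unfolding I3_def by (rule integral_nonneg[OF iI3]) simp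
  have I30: "I3 = 0"
  proof (rule ccontr)
    assume "I3 \<noteq> 0"
    hence I3p: "I3 > 0" using I3nn by simp
    show False
    proof (cases "I3 < 2 * pi")
      case False
      have a1: "kappa\<^sup>2 * (2 * pi) \<le> kappa\<^sup>2 * I3"
        using False kp by (intro mult_left_mono) auto
      have a2: "0 \<le> kappa\<^sup>2 * Cp" using kp Cpnn by simp
      have a3: "D + kappa\<^sup>2 * C = Dp + D3 + kappa\<^sup>2 * Cp + kappa\<^sup>2 * I3"
        unfolding DD CC by (simp add: distrib_left)
      have "kappa\<^sup>2 * (2 * pi) \<le> D + kappa\<^sup>2 * C" using a1 a2 a3 Dpnn D3nn by linarith
      hence "kappa\<^sup>2 \<le> (D + kappa\<^sup>2 * C) / (2 * pi)" using pi_gt_zero by (simp add: le_divide_eq)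
      thus False using le2 kp G by linarith
    next
      case True
      define s where "s = sqrt (2 * pi / (2 * pi - I3))"
      have s2: "s\<^sup>2 = 2 * pi / (2 * pi - I3)" unfolding s_def using True by simp
      define L where "L = (\<lambda>x. s *\<^sub>R Pp x)"
      have blL: "bounded_linear L" unfolding L_def
        by (rule bounded_linear_compose[OF bounded_linear_scaleR_right bl_Pp])
      define w where "w = (\<lambda>t. L (u t))"
      have Hw: "H1per w" unfolding w_def by (rule H1per_linear[OF KD(1) blL])
      have wdw: "weak_deriv w (\<lambda>t. L (v t))" unfolding w_def by (rule wd_linear[OF wdv blL])
      have "integral {-pi..pi} (\<lambda>t. (norm (w t))\<^sup>2) = s\<^sup>2 * Up"
        unfolding Up_def w_def L_def by (simp add: power_mult_distrib)
      also have "\<dots> = 2 * pi"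
      proof -
        have Upeq: "2 * pi - I3 = Up" using UU by simp
        have "Up > 0" using True Upeq by simp
        thus ?thesis using s2 unfolding Upeq by simp
      qed
      finally have wK: "w \<in> Kset" using Hw by (simp add: Kset_def)
      have "integral {-pi..pi} (\<lambda>t. (norm (wderiv w t))\<^sup>2) = integral {-pi..pi} (\<lambda>t. (norm (L (v t)))\<^sup>2)"
        by (rule wderiv_integral[OF Hw wdw])
      also have "\<dots> = s\<^sup>2 * Dp" unfolding Dp_def L_def by (simp add: power_mult_distrib)
      finally have e1: "integral {-pi..pi} (\<lambda>t. (norm (wderiv w t))\<^sup>2) = s\<^sup>2 * Dp" .
      have e2: "integral {-pi..pi} (\<lambda>t. (norm (cross3 (w t) (nvec t)))\<^sup>2) = s\<^sup>2 * Cp"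
        unfolding Cp_def w_def L_def by (simp add: pw6 power_mult_distrib)
      have Gw: "Gfun kappa w = (Dp + kappa\<^sup>2 * Cp) / (2 * pi - I3)"
      proof -
        have "Gfun kappa w = (s\<^sup>2 / (2 * pi)) * (Dp + kappa\<^sup>2 * Cp)"
          unfolding Gfun_def e1 e2 by (simp add: algebra_simps add_divide_distrib)
        moreover have "s\<^sup>2 / (2 * pi) = 1 / (2 * pi - I3)" unfolding s2 using pi_gt_zero by simp
        ultimately show ?thesis by simp
      qed
      have h1: "(Dp + kappa\<^sup>2 * Cp + (D3 + kappa\<^sup>2 * I3)) / (2 * pi) \<le> (Dp + kappa\<^sup>2 * Cp) / (2 * pi - I3)"
        using minl[OF wK] Gw G DD CC by (simp add: algebra_simps)
      have h2: "(Dp + kappa\<^sup>2 * Cp + (D3 + kappa\<^sup>2 * I3)) / (2 * pi) \<le> kappa\<^sup>2 / 2"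
        using le2 G DD CC by (simp add: algebra_simps)
      show False
        by (rule arith1[OF _ I3p True _ D3nn kp h1 h2]) (use pi_gt_zero Dpnn Cpnn kp in simp_all)
    qed
  qed
  have "\<forall>t\<in>{-pi..pi}. (u t $ 3)\<^sup>2 = 0"
    using I30 unfolding I3_def using integral_eq_0_iff[OF cont_c3_sq[OF uc]] pi_gt_zero by simp
  hence "in_plane u" unfolding in_plane_def by (simp add: inner3)
  thus ?thesis using pos le1 le2 by simp
qed


theorem mainTheorem6:
  fixes kappa :: real
  assumes "kappa\<^sup>2 > 0"
  shows "(\<forall>u. critical_point kappa u \<and> Gfun kappa u < kappa\<^sup>2 \<longrightarrow> in_plane u)
       \<and> (\<forall>u. minimizer kappa u \<longrightarrow>
            0 < Gfun kappa u \<and> Gfun kappa u \<le> min (kappa\<^sup>2 / 2) 1 \<and> in_plane u)"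
  using partA[OF assms] partB[OF assms] by blast

end
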